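(* For every instance $I=(h_1\ge\dots\ge h_n>0)$ of discrete BGT there exists an eventually periodic schedule $S^*$ (a finite prefix followed by infinitely many repetitions of a fixed finite block) with $\mathrm{MH}(S^* )=\mathrm{OPT}(I)$. Moreover, for every schedule $S$ there is an eventually periodic schedule $S'$ with $\mathrm{MH}(S')\le\mathrm{MH}(S)$.
   Context: Discrete BGT: $n$ bamboos with growth rates $h_1\ge\dots\ge h_n>0$, initial heights $0$; a schedule is an infinite sequence $(i_1,i_2,\dots)$ over $\{1,\dots,n\}$, and at the end of day $j$ bamboo $b_{i_j}$ is cut to $0$ (one cut per day, no other cuts). Height of $b_i$ at time $t$ is $h_i$ times the time since its last cut (or since time $0$). $\mathrm{MH}(S)$ = supremum of all heights over all times; $\mathrm{OPT}(I)=\inf_S\mathrm{MH}(S)$. It is known that $\mathrm{OPT}(I)\le 2\sum_i h_i<\infty$. *)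

theory Defs
  imports "HOL-Analysis.Analysis" "HOL-Library.Extended_Real"
begin

text \<open>Bamboos are indexed 1..n, growth rates h 1 .. h n.
  A schedule is S :: nat => nat; day j (j >= 1) cuts bamboo S j at the end of
  day j, i.e. at time j. The value S 0 is irrelevant.\<close>

definition is_schedule :: "nat \<Rightarrow> (nat \<Rightarrow> nat) \<Rightarrow> bool" where
  "is_schedule n S \<longleftrightarrow> (\<forall>j\<ge>1. S j \<in> {1..n})"

definition eventually_periodic :: "(nat \<Rightarrow> nat) \<Rightarrow> bool" where
  "eventually_periodic S \<longleftrightarrow> (\<exists>m p. p > 0 \<and> (\<forall>j\<ge>m. S (j + p) = S j))"

definition last_cut :: "(nat \<Rightarrow> nat) \<Rightarrow> nat \<Rightarrow> real \<Rightarrow> nat" where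
  "last_cut S i t = Max (insert 0 {d. 1 \<le> d \<and> real d < t \<and> S d = i})"

definition height :: "(nat \<Rightarrow> real) \<Rightarrow> (nat \<Rightarrow> nat) \<Rightarrow> nat \<Rightarrow> real \<Rightarrow> real" where
  "height h S i t = h i * (t - real (last_cut S i t))"

definition MH :: "nat \<Rightarrow> (nat \<Rightarrow> real) \<Rightarrow> (nat \<Rightarrow> nat) \<Rightarrow> ereal" where
  "MH n h S = (SUP p \<in> {1..n} \<times> {t::real. 0 \<le> t}. ereal (height h S (fst p) (snd p)))"

definition OPT :: "nat \<Rightarrow> (nat \<Rightarrow> real) \<Rightarrow> ereal" where
  "OPT n h = (INF S \<in> {S. is_schedule n S}. MH n h S)"

end

theory Submission imports Defs begin

primrec agef :: "(nat \<Rightarrow> nat) \<Rightarrow> nat \<Rightarrow> nat \<Rightarrow> nat" where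
  "agef S i 0 = 0"
| "agef S i (Suc j) = (if 1 \<le> j \<and> S j = i then 1 else Suc (agef S i j))"

lemma lc_nat: "last_cut S i (real j) = Max (insert 0 {d. 1 \<le> d \<and> d < j \<and> S d = i})"
  unfolding last_cut_def by simp

lemma lc_le: "last_cut S i (real j) \<le> j"
proof -
  have "finite {d. 1 \<le> d \<and> d < j \<and> S d = i}" by (rule finite_subset[of _ "{..<j}"]) auto
  then show ?thesis unfolding lc_nat by (subst Max_le_iff) auto
qed

lemma lc_Suc: "last_cut S i (real (Suc j)) = (if 1 \<le> j \<and> S j = i then j else last_cut S i (real j))"
proof -
  let ?B = "{d. 1 \<le> d \<and> d < j \<and> S d = i}"
  have fin: "finite ?B" by (rule finite_subset[of _ "{..<j}"]) auto
  have eq: "{d. 1 \<le> d \<and> d < Suc j \<and> S d = i} = (if 1 \<le> j \<and> S j = i then insert j ?B else ?B)"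
    by (auto simp: less_Suc_eq)
  show ?thesis
  proof (cases "1 \<le> j \<and> S j = i")
    case True
    have "Max (insert 0 (insert j ?B)) = j"
      by (rule Max_eqI) (use fin in auto)
    then show ?thesis using True unfolding lc_nat eq by simp
  next
    case False
    then have "{d. 1 \<le> d \<and> d < Suc j \<and> S d = i} = ?B" by (auto simp: less_Suc_eq)
    then show ?thesis using False unfolding lc_nat by auto
  qed
qed

lemma age_lc: "j - last_cut S i (real j) = agef S i j"
proof (induction j)
  case 0
  then show ?case by (simp add: lc_nat)
next
  case (Suc j)
  have "last_cut S i (real j) \<le> j" by (rule lc_le)
  then show ?case using Suc by (simp add: lc_Suc Suc_diff_le del: of_nat_Suc)
qed

lemma height_nat: "height h S i (real j) = h i * real (agef S i j)"
  unfolding height_def using age_lc[of j S i] lc_le[of S i j] by (simp add: of_nat_diff[symmetric])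

lemma lc_ceil: assumes "0 \<le> t" shows "last_cut S i t = last_cut S i (real (nat \<lceil>t\<rceil>))"
proof -
  have "\<And>d::nat. real d < t \<longleftrightarrow> real d < real (nat \<lceil>t\<rceil>)"
  proof -
    fix d :: nat
    have "real d < t \<longleftrightarrow> int d < \<lceil>t\<rceil>"
      by (metis ceiling_less_cancel ceiling_of_int less_ceiling_iff of_int_of_nat_eq
          ceiling_correct le_less_trans linorder_not_le)
    also have "\<dots> \<longleftrightarrow> real d < real (nat \<lceil>t\<rceil>)" using assms by linarith
    finally show "real d < t \<longleftrightarrow> real d < real (nat \<lceil>t\<rceil>)" .
  qed
  then show ?thesis unfolding last_cut_def by simp
qed

lemma height_le: assumes "0 \<le> t" "0 \<le> h i"
  shows "height h S i t \<le> h i * real (agef S i (nat \<lceil>t\<rceil>))"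
proof -
  have "t \<le> real (nat \<lceil>t\<rceil>)" using assms(1) by linarith
  then have "height h S i t \<le> height h S i (real (nat \<lceil>t\<rceil>))"
    unfolding height_def using lc_ceil[OF assms(1), of S i] assms(2)
    by (intro mult_left_mono) auto
  then show ?thesis by (simp add: height_nat)
qed

lemma MH_eq: assumes "\<forall>i\<in>{1..n}. 0 \<le> h i"
  shows "MH n h S = (SUP p\<in>{1..n}\<times>(UNIV::nat set). ereal (h (fst p) * real (agef S (fst p) (snd p))))"
proof (rule antisym)
  show "MH n h S \<le> (SUP p\<in>{1..n}\<times>(UNIV::nat set). ereal (h (fst p) * real (agef S (fst p) (snd p))))"
    unfolding MH_def
  proof (rule SUP_least)
    fix p assume p: "p \<in> {1..n} \<times> {t::real. 0 \<le> t}"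
    show "ereal (height h S (fst p) (snd p)) \<le> (SUP p\<in>{1..n}\<times>(UNIV::nat set). ereal (h (fst p) * real (agef S (fst p) (snd p))))"
      by (rule SUP_upper2[of "(fst p, nat \<lceil>snd p\<rceil>)"]) (use p assms height_le in auto)
  qed
  show "(SUP p\<in>{1..n}\<times>(UNIV::nat set). ereal (h (fst p) * real (agef S (fst p) (snd p)))) \<le> MH n h S"
    unfolding MH_def
  proof (rule SUP_least)
    fix p :: "nat \<times> nat" assume p: "p \<in> {1..n} \<times> UNIV"
    show "ereal (h (fst p) * real (agef S (fst p) (snd p))) \<le> (SUP p\<in>{1..n} \<times> {t::real. 0 \<le> t}. ereal (height h S (fst p) (snd p)))"
      by (rule SUP_upper2[of "(fst p, real (snd p))"]) (use p in \<open>auto simp: height_nat\<close>)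
  qed
qed


lemma sched_const: "n \<ge> 1 \<Longrightarrow> is_schedule n (\<lambda>_. 1) \<and> eventually_periodic (\<lambda>_. 1)"
  unfolding is_schedule_def eventually_periodic_def by auto

lemma part2:
  assumes n: "n \<ge> 1" and hpos: "\<forall>i\<in>{1..n}. h i > 0"
    and hmin: "\<forall>i\<in>{1..n}. h n \<le> h i"
    and S: "is_schedule n S"
  shows "\<exists>S'. is_schedule n S' \<and> eventually_periodic S' \<and> MH n h S' \<le> MH n h S"
proof (cases "MH n h S = \<infinity>")
  case True
  then show ?thesis using sched_const[OF n] by auto
next
  case False
  have h0: "\<forall>i\<in>{1..n}. 0 \<le> h i" using hpos by auto
  obtain M where M: "MH n h S \<le> ereal M" using False by (cases "MH n h S") auto
  have hn: "h n > 0" using hpos n by auto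
  define K where "K = nat \<lceil>M / h n\<rceil>"
  have bnd: "agef S i j \<le> K" if i: "i \<in> {1..n}" for i j
  proof -
    have "ereal (h i * real (agef S i j)) \<le> MH n h S"
      unfolding MH_eq[OF h0] by (rule SUP_upper2[of "(i,j)"]) (use i in auto)
    then have a: "h i * real (agef S i j) \<le> M" using M by (meson ereal_less_eq(3) order_trans)
    have "h n * real (agef S i j) \<le> h i * real (agef S i j)"
      using hmin i by (intro mult_right_mono) auto
    then have "h n * real (agef S i j) \<le> M" using a by linarith
    then have "real (agef S i j) \<le> M / h n" using hn by (simp add: field_simps)
    then show ?thesis unfolding K_def by linarith
  qed
  define f where "f j = (\<lambda>i\<in>{1..n}. agef S i j)" for j
  have "f ` {1..} \<subseteq> PiE {1..n} (\<lambda>_. {0..K})"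
    using bnd unfolding f_def by auto
  moreover have "finite (PiE {1..n} (\<lambda>_. {0..K::nat}))" by (rule finite_PiE) auto
  moreover have "infinite {1::nat..}" by (simp add: infinite_Ici)
  ultimately have "\<not> inj_on f {1..}" using inj_on_finite by blast
  then obtain x y where xy: "x \<in> {1..}" "y \<in> {1..}" "x \<noteq> y" "f x = f y"
    unfolding inj_on_def by blast
  obtain j1 j2 where j: "1 \<le> j1" "j1 < j2" "f j1 = f j2"
  proof (cases "x < y")
    case True then show ?thesis using that[of x y] xy by auto
  next
    case False then show ?thesis using that[of y x] xy by auto
  qed
  have same: "agef S i j1 = agef S i j2" if "i \<in> {1..n}" for i
    using fun_cong[OF j(3), of i] that unfolding f_def by auto
  define p where "p = j2 - j1"
  have p: "p > 0" using j unfolding p_def by auto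
  define S' where "S' j = (if j < j2 then S j else S (j1 + (j - j2) mod p))" for j
  define \<phi> where "\<phi> j = (if j < j2 then j else j1 + (j - j2) mod p)" for j
  have key: "agef S' i j = agef S i (\<phi> j)" if i: "i \<in> {1..n}" for i j
  proof (induction j)
    case 0
    then show ?case using j by (simp add: \<phi>_def)
  next
    case (Suc j)
    show ?case
    proof (cases "Suc j < j2")
      case True
      then show ?thesis using Suc by (simp add: \<phi>_def S'_def)
    next
      case F: False
      show ?thesis
      proof (cases "Suc j = j2")
        case True
        have e1: "S' j = S j" using True by (simp add: S'_def)
        have e2: "agef S' i j = agef S i j" using Suc True by (simp add: \<phi>_def)
        have "agef S' i (Suc j) = agef S i (Suc j)"
          by (simp only: agef.simps e1 e2)
        then have "agef S' i (Suc j) = agef S i j2" using True by simp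
        also have "\<dots> = agef S i j1" using same[OF i] by simp
        finally show ?thesis using True by (simp add: \<phi>_def)
      next
        case False
        then have jj: "j \<ge> j2" using F by simp
        define r where "r = (j - j2) mod p"
        have r: "r < p" using p unfolding r_def by simp
        have pj: "\<phi> j = j1 + r" "S' j = S (j1 + r)" using jj unfolding \<phi>_def S'_def r_def by auto
        have "agef S' i (Suc j) = agef S i (Suc (j1 + r))"
          using Suc jj j pj by simp
        also have "\<dots> = agef S i (\<phi> (Suc j))"
        proof (cases "Suc r = p")
          case True
          then have "Suc (j1 + r) = j2" using p_def j by simp
          moreover have "\<phi> (Suc j) = j1" using True jj unfolding \<phi>_def r_def
            by (simp add: Suc_diff_le mod_Suc)
          ultimately show ?thesis using same[OF i] by simp
        next
          case False
          have "\<phi> (Suc j) = j1 + Suc r" using False jj unfolding \<phi>_def r_def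
            by (simp add: Suc_diff_le mod_Suc)
          then show ?thesis by simp
        qed
        finally show ?thesis .
      qed
    qed
  qed
  have sched: "is_schedule n S'"
    using S j unfolding is_schedule_def S'_def by auto
  have per: "eventually_periodic S'"
    unfolding eventually_periodic_def
  proof (intro exI conjI allI impI)
    show "p > 0" by (rule p)
    fix k assume k: "j2 \<le> k"
    then have "k + p - j2 = (k - j2) + p" by simp
    then have "(k + p - j2) mod p = (k - j2) mod p" by simp
    then show "S' (k + p) = S' k" unfolding S'_def using k by simp
  qed
  have "MH n h S' \<le> MH n h S"
    unfolding MH_eq[OF h0]
  proof (rule SUP_least)
    fix q :: "nat \<times> nat" assume q: "q \<in> {1..n} \<times> UNIV"
    show "ereal (h (fst q) * real (agef S' (fst q) (snd q))) \<le> (SUP p\<in>{1..n}\<times>(UNIV::nat set). ereal (h (fst p) * real (agef S (fst p) (snd p))))"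
      by (rule SUP_upper2[of "(fst q, \<phi> (snd q))"]) (use q key in auto)
  qed
  then show ?thesis using sched per by blast
qed


lemma opt_eq: assumes "is_schedule n S0" "\<forall>S. is_schedule n S \<longrightarrow> MH n h S0 \<le> MH n h S"
  shows "MH n h S0 = OPT n h"
  unfolding OPT_def
  by (rule antisym) (use assms in \<open>auto intro: INF_greatest INF_lower2\<close>)

theorem mainTheorem6:
  fixes n :: nat and h :: "nat \<Rightarrow> real"
  assumes "n \<ge> 1"
    and "\<forall>i\<in>{1..n}. h i > 0"
    and "\<forall>i j. 1 \<le> i \<longrightarrow> i \<le> j \<longrightarrow> j \<le> n \<longrightarrow> h j \<le> h i"
  shows "(\<exists>S. is_schedule n S \<and> eventually_periodic S \<and> MH n h S = OPT n h)
       \<and> (\<forall>S. is_schedule n S \<longrightarrow>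
            (\<exists>S'. is_schedule n S' \<and> eventually_periodic S' \<and> MH n h S' \<le> MH n h S))"
proof -
  have hmin: "\<forall>i\<in>{1..n}. h n \<le> h i" using assms(3) by auto
  have P2: "\<forall>S. is_schedule n S \<longrightarrow>
            (\<exists>S'. is_schedule n S' \<and> eventually_periodic S' \<and> MH n h S' \<le> MH n h S)"
    using part2[OF assms(1,2) hmin] by blast
  have h0: "\<forall>i\<in>{1..n}. 0 \<le> h i" using assms(2) by auto
  have hn: "h n > 0" using assms(1,2) by auto
  obtain Sst where Sst: "is_schedule n Sst" "\<forall>S. is_schedule n S \<longrightarrow> MH n h Sst \<le> MH n h S"
  proof (cases "\<forall>S. is_schedule n S \<longrightarrow> MH n h S = \<infinity>")
    case True
    then show ?thesis using that[of "\<lambda>_. 1"] sched_const[OF assms(1)] by auto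
  next
    case False
    then obtain S0 where S0: "is_schedule n S0" "MH n h S0 \<noteq> \<infinity>" by blast
    obtain B where B: "MH n h S0 \<le> ereal B" using S0(2) by (cases "MH n h S0") auto
    define K where "K = nat \<lceil>B / h n\<rceil>"
    define V where "V = (\<lambda>q. ereal (h (fst q) * real (snd q))) ` ({1..n} \<times> {0..K})"
    have finV: "finite V" unfolding V_def by auto
    have inV: "MH n h S \<in> V" if "MH n h S \<le> ereal B" for S
    proof -
      define A where "A = (\<lambda>p. ereal (h (fst p) * real (agef S (fst p) (snd p)))) ` ({1..n}\<times>(UNIV::nat set))"
      have MHA: "MH n h S = Sup A" unfolding A_def MH_eq[OF h0] by simp
      have AV: "A \<subseteq> V"
      proof
        fix a assume "a \<in> A"
        then obtain q where q: "q \<in> {1..n}\<times>(UNIV::nat set)" "a = ereal (h (fst q) * real (agef S (fst q) (snd q)))"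
          unfolding A_def by blast
        define i where "i = fst q"
        define j where "j = snd q"
        have ij: "i \<in> {1..n}" "a = ereal (h i * real (agef S i j))" using q unfolding i_def j_def by auto
        have "a \<le> MH n h S" unfolding MHA using \<open>a \<in> A\<close> by (rule Sup_upper)
        then have a: "h i * real (agef S i j) \<le> B" using that ij by (meson ereal_less_eq(3) order_trans)
        have "h n * real (agef S i j) \<le> h i * real (agef S i j)"
          using hmin ij by (intro mult_right_mono) auto
        then have "real (agef S i j) \<le> B / h n" using a hn by (simp add: field_simps)
        then have "agef S i j \<le> K" unfolding K_def by linarith
        then show "a \<in> V" unfolding V_def using ij by force
      qed
      have "finite A" using AV finV finite_subset by blast
      moreover have "A \<noteq> {}" unfolding A_def using assms(1) by auto
      ultimately have "Sup A \<in> A" by (simp add: cSup_eq_Max)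
      then show ?thesis using AV MHA by auto
    qed
    define W where "W = MH n h ` {S. is_schedule n S \<and> MH n h S \<le> ereal B}"
    have finW: "finite W" using inV finV unfolding W_def by (auto intro: finite_subset)
    have neW: "W \<noteq> {}" unfolding W_def using S0 B by auto
    have "Min W \<in> W" using finW neW by (rule Min_in)
    then obtain S1 where S1: "is_schedule n S1" "MH n h S1 \<le> ereal B" "MH n h S1 = Min W"
      unfolding W_def by auto
    have "MH n h S1 \<le> MH n h S" if "is_schedule n S" for S
    proof (cases "MH n h S \<le> ereal B")
      case True
      then have "MH n h S \<in> W" unfolding W_def using that by auto
      then show ?thesis using S1(3) finW by simp
    next
      case False
      then show ?thesis using S1(2) by simp
    qed
    then show ?thesis using that[of S1] S1 by blast
  qed
  obtain S' where S': "is_schedule n S'" "eventually_periodic S'" "MH n h S' \<le> MH n h Sst"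
    using P2 Sst(1) by blast
  have "MH n h S' = MH n h Sst" using S'(3) Sst(2) S'(1) by (simp add: antisym)
  moreover have "MH n h Sst = OPT n h" by (rule opt_eq[OF Sst])
  ultimately show ?thesis using S' P2 by auto
qed

end
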